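(* There is an absolute constant $C$ such that the following holds: if $\Gamma_\mathcal{D}$ is the incidence graph of an $\mathrm{STD}_\lambda[k;g]$ (with $\lambda\ge1$, $g\ge2$), having $n=2\lambda g^2$ vertices, then $\mu(\Gamma_\mathcal{D})\le C\sqrt{n}\log n$; that is, $\mu(\Gamma_\mathcal{D})=O(\sqrt{n}\log n)$.
   Context: A transversal design $\mathrm{TD}_\lambda[k;g]$ ($g\ge2$) is a triple $(X,\mathcal{G},\mathcal{B})$ where $X$ is a set of $kg$ points, $\mathcal{G}$ is a partition of $X$ into $k$ point classes of size $g$, and $\mathcal{B}$ is a family of $k$-subsets of $X$ (blocks) such that each block contains exactly one point of each point class and any two points from distinct point classes lie in exactly $\lambda$ blocks. It is symmetric (an $\mathrm{STD}_\lambda[k;g]$) if its dual (interchanging points and blocks) is also a $\mathrm{TD}_\lambda[k;g]$; then $k=\lambda g$ and $|X|=|\mathcal{B}|=\lambda g^2$. The incidence graph is the bipartite graph on $X\cup\mathcal{B}$ with $x$ adjacent to $B$ iff $x\in B$. A resolving set of a connected graph is a set $S$ of vertices such that for any two distinct vertices $u,w$ some $s\in S$ has $d(u,s)\neq d(w,s)$; the metric dimension $\mu(\Gamma)$ is the minimum size of a resolving set. *)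

theory Defs
  imports Complex_Main "HOL-Library.Disjoint_Sets"
begin

text \<open>A transversal design TD_lambda[k;g] given as an incidence structure:
  point set P, block index set Bl (blocks are indexed, so repeated blocks are
  allowed, i.e. a family of k-subsets), incidence relation I p b meaning
  "point p lies in block b".\<close>
definition TD :: "nat \<Rightarrow> nat \<Rightarrow> nat \<Rightarrow> 'p set \<Rightarrow> 'b set \<Rightarrow> ('p \<Rightarrow> 'b \<Rightarrow> bool) \<Rightarrow> bool" where
  "TD lam k g P Bl I \<longleftrightarrow>
     g \<ge> 2 \<and> finite P \<and> finite Bl \<and> card P = k * g \<and>
     (\<exists>G. partition_on P G \<and> card G = k \<and> (\<forall>c\<in>G. card c = g) \<and>
        (\<forall>b\<in>Bl. card {p\<in>P. I p b} = k \<and> (\<forall>c\<in>G. card {p\<in>c. I p b} = 1)) \<and>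
        (\<forall>c1\<in>G. \<forall>c2\<in>G. c1 \<noteq> c2 \<longrightarrow> (\<forall>p\<in>c1. \<forall>q\<in>c2.
            card {b\<in>Bl. I p b \<and> I q b} = lam)))"

definition STD :: "nat \<Rightarrow> nat \<Rightarrow> nat \<Rightarrow> 'p set \<Rightarrow> 'b set \<Rightarrow> ('p \<Rightarrow> 'b \<Rightarrow> bool) \<Rightarrow> bool" where
  "STD lam k g P Bl I \<longleftrightarrow> TD lam k g P Bl I \<and> TD lam k g Bl P (\<lambda>b p. I p b)"

definition inc_vertices :: "'p set \<Rightarrow> 'b set \<Rightarrow> ('p + 'b) set" where
  "inc_vertices P Bl = Inl ` P \<union> Inr ` Bl"

definition inc_edges :: "'p set \<Rightarrow> 'b set \<Rightarrow> ('p \<Rightarrow> 'b \<Rightarrow> bool) \<Rightarrow> ('p + 'b) rel" where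
  "inc_edges P Bl I =
     {(Inl p, Inr b) | p b. p \<in> P \<and> b \<in> Bl \<and> I p b} \<union>
     {(Inr b, Inl p) | p b. p \<in> P \<and> b \<in> Bl \<and> I p b}"

definition gdist :: "'v rel \<Rightarrow> 'v \<Rightarrow> 'v \<Rightarrow> nat" where
  "gdist E u v = (LEAST n. (u, v) \<in> E ^^ n)"

definition resolving :: "'v set \<Rightarrow> 'v rel \<Rightarrow> 'v set \<Rightarrow> bool" where
  "resolving V E S \<longleftrightarrow> S \<subseteq> V \<and>
     (\<forall>u\<in>V. \<forall>w\<in>V. u \<noteq> w \<longrightarrow> (\<exists>s\<in>S. gdist E u s \<noteq> gdist E w s))"

definition metric_dim :: "'v set \<Rightarrow> 'v rel \<Rightarrow> nat" where
  "metric_dim V E = (LEAST m. \<exists>S. resolving V E S \<and> finite S \<and> card S = m)"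

end

theory Submission
  imports Defs "HOL-Library.FuncSet"
begin

lemma two_in_one:
  assumes "card {x\<in>c. J x} = 1" "q \<in> c" "q' \<in> c" "J q" "J q'"
  shows "q = q'"
proof -
  obtain z where "{x\<in>c. J x} = {z}" using assms(1) by (rule card_1_singletonE)
  then have "q \<in> {z}" "q' \<in> {z}" using assms(2-5) by blast+
  then show ?thesis by simp
qed

lemma TD_common_le:
  assumes "TD lam k g P Bl I" "p \<in> P" "q \<in> P" "p \<noteq> q"
  shows "card {b\<in>Bl. I p b \<and> I q b} \<le> lam"
proof -
  obtain G where part: "partition_on P G" and
    blk: "\<forall>b\<in>Bl. card {p\<in>P. I p b} = k \<and> (\<forall>c\<in>G. card {p\<in>c. I p b} = 1)" and
    lm: "\<forall>c1\<in>G. \<forall>c2\<in>G. c1 \<noteq> c2 \<longrightarrow> (\<forall>p\<in>c1. \<forall>q\<in>c2. card {b\<in>Bl. I p b \<and> I q b} = lam)"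
    using assms(1) unfolding TD_def by blast
  have U: "\<Union>G = P" using part by (simp add: partition_on_def)
  obtain c1 where c1: "c1 \<in> G" "p \<in> c1" using U assms(2) by blast
  obtain c2 where c2: "c2 \<in> G" "q \<in> c2" using U assms(3) by blast
  show ?thesis
  proof (cases "c1 = c2")
    case True
    have "{b\<in>Bl. I p b \<and> I q b} = {}"
    proof (rule ccontr)
      assume "{b\<in>Bl. I p b \<and> I q b} \<noteq> {}"
      then obtain b where b: "b \<in> Bl" "I p b" "I q b" by blast
      have "card {x\<in>c1. I x b} = 1" using blk b(1) c1(1) by blast
      then have "p = q" using two_in_one[of c1 "\<lambda>x. I x b" p q] b c1 c2 True by blast
      then show False using assms(4) by blast
    qed
    then show ?thesis by (metis card.empty le0)
  next
    case False
    then show ?thesis using lm[rule_format, OF c1(1) c2(1) False c1(2) c2(2)] by simp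
  qed
qed

lemma TD_kg:
  assumes "TD lam k g P Bl I" "k \<ge> 2" "p \<in> P" "card {b\<in>Bl. I p b} = k"
  shows "k = lam * g"
proof -
  obtain G where fin: "finite Bl" and part: "partition_on P G" and cG: "card G = k" and
    cls: "\<forall>c\<in>G. card c = g" and g2: "g \<ge> 2" and
    blk: "\<forall>b\<in>Bl. card {p\<in>P. I p b} = k \<and> (\<forall>c\<in>G. card {p\<in>c. I p b} = 1)" and
    lm: "\<forall>c1\<in>G. \<forall>c2\<in>G. c1 \<noteq> c2 \<longrightarrow> (\<forall>p\<in>c1. \<forall>q\<in>c2. card {b\<in>Bl. I p b \<and> I q b} = lam)"
    using assms(1) unfolding TD_def by blast
  have U: "\<Union>G = P" using part by (simp add: partition_on_def)
  obtain c1 where c1: "c1 \<in> G" "p \<in> c1" using U assms(3) by blast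
  have "\<exists>c2\<in>G. c2 \<noteq> c1"
  proof (rule ccontr)
    assume "\<not> ?thesis"
    then have "G \<subseteq> {c1}" by blast
    then have "card G \<le> 1" using card_mono[of "{c1}" G] by simp
    then show False using cG assms(2) by simp
  qed
  then obtain c2 where c2: "c2 \<in> G" "c2 \<noteq> c1" by blast
  have fc2: "finite c2" using cls c2 g2 by (metis card.infinite not_numeral_le_zero)
  have eq: "{b\<in>Bl. I p b} = (\<Union>q\<in>c2. {b\<in>Bl. I p b \<and> I q b})"
  proof
    show "{b\<in>Bl. I p b} \<subseteq> (\<Union>q\<in>c2. {b\<in>Bl. I p b \<and> I q b})"
    proof
      fix b assume b: "b \<in> {b\<in>Bl. I p b}"
      then have "card {x\<in>c2. I x b} = 1" using blk c2 by blast
      then obtain z where "{x\<in>c2. I x b} = {z}" by (rule card_1_singletonE)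
      then show "b \<in> (\<Union>q\<in>c2. {b\<in>Bl. I p b \<and> I q b})" using b by blast
    qed
  qed blast
  have "card (\<Union>q\<in>c2. {b\<in>Bl. I p b \<and> I q b}) = (\<Sum>q\<in>c2. card {b\<in>Bl. I p b \<and> I q b})"
  proof (rule card_UN_disjoint[OF fc2])
    show "\<forall>i\<in>c2. finite {b \<in> Bl. I p b \<and> I i b}" using fin by simp
    show "\<forall>i\<in>c2. \<forall>j\<in>c2. i \<noteq> j \<longrightarrow> {b \<in> Bl. I p b \<and> I i b} \<inter> {b \<in> Bl. I p b \<and> I j b} = {}"
    proof (intro ballI impI)
      fix i j assume ij: "i \<in> c2" "j \<in> c2" "i \<noteq> j"
      show "{b \<in> Bl. I p b \<and> I i b} \<inter> {b \<in> Bl. I p b \<and> I j b} = {}"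
      proof (rule ccontr)
        assume "\<not> ?thesis"
        then obtain b where b: "b \<in> Bl" "I i b" "I j b" by blast
        have "card {x\<in>c2. I x b} = 1" using blk b(1) c2(1) by blast
        then have "i = j" using two_in_one[of c2 "\<lambda>x. I x b" i j] b ij by blast
        then show False using ij by blast
      qed
    qed
  qed
  also have "\<dots> = (\<Sum>q\<in>c2. lam)"
    by (rule sum.cong) (use lm c1 c2 in auto)
  also have "\<dots> = g * lam" using cls c2 by simp
  finally show ?thesis using eq assms(4) by (metis mult.commute)
qed

lemma TD_dist:
  assumes "TD lam k g P Bl I" "\<forall>p\<in>P. card {b\<in>Bl. I p b} = k" "k = lam * g"
    "p \<in> P" "q \<in> P" "p \<noteq> q"
  shows "k \<le> card {b\<in>Bl. I p b \<noteq> I q b}"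
proof -
  have fin: "finite Bl" and g2: "g \<ge> 2" using assms(1) unfolding TD_def by auto
  define C where "C = {b\<in>Bl. I p b \<and> I q b}"
  have cC: "card C \<le> lam" unfolding C_def by (rule TD_common_le[OF assms(1,4,5,6)])
  have X: "{b\<in>Bl. I p b \<and> \<not> I q b} = {b\<in>Bl. I p b} - C" unfolding C_def by blast
  have Y: "{b\<in>Bl. I q b \<and> \<not> I p b} = {b\<in>Bl. I q b} - C" unfolding C_def by blast
  have cX: "card {b\<in>Bl. I p b \<and> \<not> I q b} = k - card C"
    unfolding X using assms(2,4) fin by (subst card_Diff_subset) (auto simp: C_def)
  have cY: "card {b\<in>Bl. I q b \<and> \<not> I p b} = k - card C"
    unfolding Y using assms(2,5) fin by (subst card_Diff_subset) (auto simp: C_def)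
  have cu: "card ({b\<in>Bl. I p b \<and> \<not> I q b} \<union> {b\<in>Bl. I q b \<and> \<not> I p b}) =
        card {b\<in>Bl. I p b \<and> \<not> I q b} + card {b\<in>Bl. I q b \<and> \<not> I p b}"
    by (rule card_Un_disjoint) (use fin in auto)
  have "card ({b\<in>Bl. I p b \<and> \<not> I q b} \<union> {b\<in>Bl. I q b \<and> \<not> I p b}) \<le> card {b\<in>Bl. I p b \<noteq> I q b}"
    by (rule card_mono) (use fin in auto)
  then have "card {b\<in>Bl. I p b \<and> \<not> I q b} + card {b\<in>Bl. I q b \<and> \<not> I p b} \<le> card {b\<in>Bl. I p b \<noteq> I q b}"
    using cu by simp
  then have "2 * (k - card C) \<le> card {b\<in>Bl. I p b \<noteq> I q b}" using cX cY by simp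
  moreover have "k \<le> 2 * (k - card C)"
  proof -
    have "2 * lam \<le> k" using assms(3) g2 by simp
    then show ?thesis using cC by linarith
  qed
  ultimately show ?thesis by linarith
qed

lemma hitting:
  fixes A :: "'a set" and U :: "'u set" and D :: "'u \<Rightarrow> 'a set"
  assumes "finite A" "finite U" "\<forall>x\<in>U. D x \<subseteq> A \<and> m \<le> card (D x)"
    "card U * (card A - m) ^ t < card A ^ t"
  shows "\<exists>T \<subseteq> A. card T \<le> t \<and> (\<forall>x\<in>U. T \<inter> D x \<noteq> {})"
proof -
  define F where "F = (\<Pi>\<^sub>E i\<in>{..<t}. A)"
  define Bad where "Bad = (\<Union>x\<in>U. (\<Pi>\<^sub>E i\<in>{..<t}. A - D x))"
  have cF: "card F = card A ^ t" unfolding F_def by (simp add: card_PiE)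
  have "card Bad \<le> (\<Sum>x\<in>U. card (\<Pi>\<^sub>E i\<in>{..<t}. A - D x))"
    unfolding Bad_def by (rule card_UN_le[OF assms(2)])
  also have "\<dots> \<le> (\<Sum>x\<in>U. (card A - m) ^ t)"
  proof (rule sum_mono)
    fix x assume x: "x \<in> U"
    have "card (A - D x) = card A - card (D x)"
      using x assms(1,3) by (subst card_Diff_subset) (auto intro: finite_subset)
    also have "\<dots> \<le> card A - m" using x assms(3) by auto
    finally show "card (\<Pi>\<^sub>E i\<in>{..<t}. A - D x) \<le> (card A - m) ^ t"
      by (simp add: card_PiE power_mono)
  qed
  also have "\<dots> = card U * (card A - m) ^ t" by simp
  finally have "card Bad < card F" using assms(4) cF by linarith
  have finBad: "finite Bad" unfolding Bad_def using assms(1,2) by (auto intro!: finite_PiE)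
  have "\<not> F \<subseteq> Bad"
  proof
    assume "F \<subseteq> Bad"
    then have "card F \<le> card Bad" using finBad by (rule card_mono[rotated])
    then show False using \<open>card Bad < card F\<close> by simp
  qed
  then obtain f where f: "f \<in> F" "f \<notin> Bad" by blast
  show ?thesis
  proof (intro exI conjI ballI)
    show "f ` {..<t} \<subseteq> A" using f(1) unfolding F_def by auto
    show "card (f ` {..<t}) \<le> t" using card_image_le[of "{..<t}" f] by simp
    fix x assume x: "x \<in> U"
    have "f \<notin> (\<Pi>\<^sub>E i\<in>{..<t}. A - D x)" using f(2) x unfolding Bad_def by blast
    then obtain i where "i < t" "f i \<notin> A - D x"
      using f(1) unfolding F_def by (auto simp: PiE_def Pi_def)
    moreover have "f i \<in> A" using f(1) \<open>i < t\<close> unfolding F_def by auto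
    ultimately show "f ` {..<t} \<inter> D x \<noteq> {}" by auto
  qed
qed

lemma bern: "(a::nat) \<ge> 1 \<Longrightarrow> 2 * a ^ a \<le> (a + 1) ^ a"
proof -
  assume a: "a \<ge> 1"
  have "1 + real a * (1 / real a) \<le> (1 + 1 / real a) ^ a"
    by (rule Bernoulli_inequality) (simp add: order_trans[of _ 0])
  then have "2 \<le> ((real a + 1) / real a) ^ a" using a by (simp add: field_simps)
  then have "2 \<le> (real a + 1) ^ a / real a ^ a" by (simp add: power_divide)
  then have "2 * real a ^ a \<le> (real a + 1) ^ a" using a by (simp add: field_simps)
  then have "real (2 * a ^ a) \<le> real ((a + 1) ^ a)" by (simp add: add.commute)
  then show ?thesis by (simp only: of_nat_le_iff)
qed

lemma count_arith:
  fixes N g s m :: nat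
  assumes "g \<ge> 2" "N ^ 2 < 2 ^ s" "N \<le> m * g" "N \<ge> 1"
  shows "N ^ 2 * (N - m) ^ ((g - 1) * s) < N ^ ((g - 1) * s)"
proof -
  define t where "t = (g - 1) * s"
  have h1: "(N - m) * g \<le> (g - 1) * N"
  proof -
    have "(N - m) * g = N * g - m * g" by (simp add: diff_mult_distrib)
    also have "\<dots> \<le> N * g - N" using assms(3) by simp
    also have "\<dots> = (g - 1) * N" by (simp add: diff_mult_distrib mult.commute[of N g])
    finally show ?thesis .
  qed
  have h2: "2 ^ s * (g - 1) ^ t \<le> g ^ t"
  proof -
    have "2 * (g - 1) ^ (g - 1) \<le> g ^ (g - 1)" using bern[of "g - 1"] assms(1) by simp
    then have "(2 * (g - 1) ^ (g - 1)) ^ s \<le> (g ^ (g - 1)) ^ s" by (rule power_mono) simp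
    then show ?thesis unfolding t_def by (simp add: power_mult power_mult_distrib)
  qed
  have "(N - m) ^ t * (2 ^ s * (g - 1) ^ t) \<le> (N - m) ^ t * g ^ t"
    using h2 by (rule mult_left_mono) simp
  also have "\<dots> = ((N - m) * g) ^ t" by (simp add: power_mult_distrib)
  also have "\<dots> \<le> ((g - 1) * N) ^ t" using h1 by (rule power_mono) simp
  also have "\<dots> = (g - 1) ^ t * N ^ t" by (simp add: power_mult_distrib)
  finally have "((N - m) ^ t * 2 ^ s) * (g - 1) ^ t \<le> N ^ t * (g - 1) ^ t"
    by (simp add: ac_simps)
  moreover have "(g - 1) ^ t > 0" using assms(1) by simp
  ultimately have h3: "(N - m) ^ t * 2 ^ s \<le> N ^ t"
    using mult_le_cancel2 by blast
  show ?thesis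
  proof (cases "(N - m) ^ t = 0")
    case True
    have "N > 0" using assms(4) by simp
    then show ?thesis using True unfolding t_def by (metis mult_0_right zero_less_power)
  next
    case False
    then have "N ^ 2 * (N - m) ^ t < 2 ^ s * (N - m) ^ t"
      using assms(2) by (intro mult_strict_right_mono) auto
    then have "N ^ 2 * (N - m) ^ t < N ^ t" using h3 by (metis mult.commute order_less_le_trans)
    then show ?thesis unfolding t_def .
  qed
qed



lemma parity:
  fixes E :: "('a + 'b) rel" and u v :: "'a + 'b"
  assumes "\<And>x y. (x, y) \<in> E \<Longrightarrow> isl x \<noteq> isl y"
  shows "(u, v) \<in> E ^^ n \<Longrightarrow> ((isl u = isl v) \<longleftrightarrow> even n)"
proof (induction n arbitrary: v)
  case 0
  then have "u = v" by (metis relpow_0_E)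
  then show ?case by simp
next
  case (Suc n)
  then obtain w where "(u, w) \<in> E ^^ n" "(w, v) \<in> E" by auto
  then show ?case using Suc.IH assms by fastforce
qed

lemma gdist_in:
  assumes "\<exists>n. (u, v) \<in> E ^^ n"
  shows "(u, v) \<in> E ^^ (gdist E u v)"
  unfolding gdist_def using assms by (rule LeastI_ex)

lemma gdist_self: "gdist E u u = 0"
  unfolding gdist_def by (rule Least_equality) auto

lemma gdist_one:
  assumes "(u, v) \<in> E" "u \<noteq> v"
  shows "gdist E u v = 1"
  unfolding gdist_def
proof (rule Least_equality)
  show "(u, v) \<in> E ^^ 1" using assms by simp
  fix y assume "(u, v) \<in> E ^^ y"
  then show "1 \<le> y" using assms(2) by (cases y) auto
qed

lemma gdist_unreach:
  assumes "\<not> (\<exists>n. (u, v) \<in> E ^^ n)"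
  shows "gdist E u v = (LEAST n::nat. False)"
proof -
  have "(\<lambda>n. (u, v) \<in> E ^^ n) = (\<lambda>n. False)" using assms by auto
  then show ?thesis unfolding gdist_def by simp
qed

lemma all_resolving:
  assumes nb: "\<forall>u\<in>V. \<exists>u'\<in>V. (u, u') \<in> E \<and> u \<noteq> u'"
    and sy: "\<And>x y. (x, y) \<in> E \<Longrightarrow> (y, x) \<in> E"
  shows "resolving V E V"
  unfolding resolving_def
proof (intro conjI ballI impI)
  show "V \<subseteq> V" by simp
  fix u w assume u: "u \<in> V" and w: "w \<in> V" and uw: "u \<noteq> w"
  show "\<exists>s\<in>V. gdist E u s \<noteq> gdist E w s"
  proof (cases "gdist E w u = 0")
    case False
    then show ?thesis using u gdist_self[of E u] by metis
  next
    case True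
    have nr: "\<not> (\<exists>n. (w, u) \<in> E ^^ n)"
    proof
      assume "\<exists>n. (w, u) \<in> E ^^ n"
      from gdist_in[OF this] True have "(w, u) \<in> E ^^ 0" by simp
      then show False using uw by simp
    qed
    have Z: "(LEAST n::nat. False) = 0" using True gdist_unreach[OF nr] by simp
    obtain u' where u': "u' \<in> V" "(u, u') \<in> E" "u \<noteq> u'" using nb u by blast
    have d1: "gdist E u u' = 1" by (rule gdist_one[OF u'(2,3)])
    have "gdist E w u' = 0"
    proof (cases "w = u'")
      case True then show ?thesis by (simp add: gdist_self)
    next
      case False
      have "\<not> (\<exists>n. (w, u') \<in> E ^^ n)"
      proof
        assume "\<exists>n. (w, u') \<in> E ^^ n"
        then obtain n where "(w, u') \<in> E ^^ n" by blast
        moreover have "(u', u) \<in> E" using sy u'(2) .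
        ultimately show False using nr by (meson relpow_Suc_I)
      qed
      then show ?thesis using gdist_unreach Z by metis
    qed
    then show ?thesis using d1 u'(1) by (intro bexI[of _ u']) auto
  qed
qed



locale stdl =
  fixes lam k g :: nat and P :: "'p set" and Bl :: "'b set" and I :: "'p \<Rightarrow> 'b \<Rightarrow> bool"
  assumes td: "TD lam k g P Bl I" and tdd: "TD lam k g Bl P (\<lambda>b p. I p b)"
    and lam1: "lam \<ge> 1" and k2: "k \<ge> 2"
begin

abbreviation "E \<equiv> inc_edges P Bl I"
abbreviation "V \<equiv> inc_vertices P Bl"

lemma g2: "g \<ge> 2" and finP: "finite P" and finB: "finite Bl"
  and cP: "card P = k * g" and cB: "card Bl = k * g"
  using td tdd unfolding TD_def by auto

lemma ptdeg: "p \<in> P \<Longrightarrow> card {b\<in>Bl. I p b} = k"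
  using tdd unfolding TD_def by auto

lemma blkdeg: "b \<in> Bl \<Longrightarrow> card {p\<in>P. I p b} = k"
  using td unfolding TD_def by auto

lemma Pne: "\<exists>p. p \<in> P"
  using cP k2 g2 by (metis all_not_in_conv card.empty mult_is_0 not_numeral_le_zero)

lemma kg: "k = lam * g"
  using Pne TD_kg[OF td k2] ptdeg by blast

lemma pt_has_blk: "p \<in> P \<Longrightarrow> \<exists>b\<in>Bl. I p b"
  using ptdeg[of p] k2 by (metis (no_types, lifting) Collect_empty_eq card.empty not_numeral_le_zero)

lemma blk_has_pt: "b \<in> Bl \<Longrightarrow> \<exists>p\<in>P. I p b"
  using blkdeg[of b] k2 by (metis (no_types, lifting) Collect_empty_eq card.empty not_numeral_le_zero)

lemma e1: "(Inl p, Inr b) \<in> E \<longleftrightarrow> p \<in> P \<and> b \<in> Bl \<and> I p b"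
  unfolding inc_edges_def by auto
lemma e2: "(Inr b, Inl p) \<in> E \<longleftrightarrow> p \<in> P \<and> b \<in> Bl \<and> I p b"
  unfolding inc_edges_def by auto
lemma e_isl: "(x, y) \<in> E \<Longrightarrow> isl x \<noteq> isl y"
  unfolding inc_edges_def by auto
lemma e_sym: "(x, y) \<in> E \<Longrightarrow> (y, x) \<in> E"
  unfolding inc_edges_def by auto

lemma step2: "p \<in> P \<Longrightarrow> q \<in> P \<Longrightarrow> b \<in> Bl \<Longrightarrow> I p b \<Longrightarrow> I q b \<Longrightarrow> (Inl p, Inl q) \<in> E\<^sup>*"
proof -
  assume a: "p \<in> P" "q \<in> P" "b \<in> Bl" "I p b" "I q b"
  have "(Inl p, Inr b) \<in> E" "(Inr b, Inl q) \<in> E" using a e1 e2 by auto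
  then show ?thesis by (meson r_into_rtrancl rtrancl_trans)
qed

lemma conn_pts: "p \<in> P \<Longrightarrow> q \<in> P \<Longrightarrow> (Inl p, Inl q) \<in> E\<^sup>*"
proof -
  assume p: "p \<in> P" and q: "q \<in> P"
  obtain G where part: "partition_on P G" and cG: "card G = k" and
    cls: "\<forall>c\<in>G. card c = g" and
    lm: "\<forall>c1\<in>G. \<forall>c2\<in>G. c1 \<noteq> c2 \<longrightarrow> (\<forall>p\<in>c1. \<forall>q\<in>c2. card {b\<in>Bl. I p b \<and> I q b} = lam)"
    using td unfolding TD_def by blast
  have U: "\<Union>G = P" using part by (simp add: partition_on_def)
  have com: "\<exists>b\<in>Bl. I x b \<and> I y b" if "c \<in> G" "c' \<in> G" "c \<noteq> c'" "x \<in> c" "y \<in> c'" for c c' x y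
  proof -
    have "card {b\<in>Bl. I x b \<and> I y b} = lam" using lm that by blast
    then obtain b where "b \<in> {b\<in>Bl. I x b \<and> I y b}" using lam1
      by (metis all_not_in_conv card.empty not_one_le_zero)
    then show ?thesis by blast
  qed
  obtain c1 where c1: "c1 \<in> G" "p \<in> c1" using U p by blast
  obtain c2 where c2: "c2 \<in> G" "q \<in> c2" using U q by blast
  show ?thesis
  proof (cases "c1 = c2")
    case False
    then show ?thesis using com[OF c1(1) c2(1) False c1(2) c2(2)] step2 p q by blast
  next
    case True
    have "\<exists>c'\<in>G. c' \<noteq> c1"
    proof (rule ccontr)
      assume "\<not> ?thesis"
      then have "G \<subseteq> {c1}" by blast
      then have "card G \<le> 1" using card_mono[of "{c1}" G] by simp
      then show False using cG k2 by simp
    qed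
    then obtain c' where c': "c' \<in> G" "c' \<noteq> c1" by blast
    have "c' \<noteq> {}" using cls c' g2 by (metis card.empty not_numeral_le_zero)
    then obtain r where r: "r \<in> c'" by blast
    have rP: "r \<in> P" using r c' U by blast
    have "(Inl p, Inl r) \<in> E\<^sup>*"
      using com[OF c1(1) c'(1) c'(2)[symmetric] c1(2) r] step2 p rP by blast
    moreover have "(Inl r, Inl q) \<in> E\<^sup>*"
      using com[OF c'(1) c1(1) c'(2) r] c2(2) True step2 q rP by blast
    ultimately show ?thesis by (rule rtrancl_trans)
  qed
qed

lemma conn: "u \<in> V \<Longrightarrow> v \<in> V \<Longrightarrow> (u, v) \<in> E\<^sup>*"
proof -
  assume u: "u \<in> V" and v: "v \<in> V"
  have toP: "\<exists>p\<in>P. (x, Inl p) \<in> E\<^sup>* \<and> (Inl p, x) \<in> E\<^sup>*" if xV: "x \<in> V" for x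
  proof -
    consider (L) p where "x = Inl p" "p \<in> P" | (R) b where "x = Inr b" "b \<in> Bl"
      using xV unfolding inc_vertices_def by blast
    then show ?thesis
    proof cases
      case L then show ?thesis by blast
    next
      case R
      then obtain p where "p \<in> P" "I p b" using blk_has_pt by blast
      then have "(Inr b, Inl p) \<in> E" "(Inl p, Inr b) \<in> E" using R e1 e2 by auto
      then show ?thesis using R \<open>p \<in> P\<close> by blast
    qed
  qed
  obtain p where p: "p \<in> P" "(u, Inl p) \<in> E\<^sup>*" using toP[OF u] by blast
  obtain q where q: "q \<in> P" "(Inl q, v) \<in> E\<^sup>*" using toP[OF v] by blast
  show ?thesis using p q conn_pts[OF p(1) q(1)] by (meson rtrancl_trans)
qed

lemma reach: "u \<in> V \<Longrightarrow> v \<in> V \<Longrightarrow> \<exists>n. (u, v) \<in> E ^^ n"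
  using conn rtrancl_power by blast

lemma par_dist:
  assumes "u \<in> V" "w \<in> V" "s \<in> V" "isl u \<noteq> isl w"
  shows "gdist E u s \<noteq> gdist E w s"
proof -
  have a: "(isl u = isl s) \<longleftrightarrow> even (gdist E u s)"
    by (rule parity[OF e_isl gdist_in[OF reach[OF assms(1,3)]]])
  have b: "(isl w = isl s) \<longleftrightarrow> even (gdist E w s)"
    by (rule parity[OF e_isl gdist_in[OF reach[OF assms(2,3)]]])
  show ?thesis using a b assms(4) by auto
qed

lemma gd_pb:
  assumes "p \<in> P" "b \<in> Bl"
  shows "gdist E (Inl p) (Inr b) = 1 \<longleftrightarrow> I p b"
proof
  assume "gdist E (Inl p) (Inr b) = 1"
  moreover have "(Inl p, Inr b) \<in> E ^^ gdist E (Inl p) (Inr b)"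
    by (rule gdist_in[OF reach]) (use assms in \<open>auto simp: inc_vertices_def\<close>)
  ultimately have "(Inl p, Inr b) \<in> E" by simp
  then show "I p b" using e1 by blast
next
  assume "I p b"
  then show "gdist E (Inl p) (Inr b) = 1" using assms by (intro gdist_one) (auto simp: e1)
qed

lemma gd_bp:
  assumes "p \<in> P" "b \<in> Bl"
  shows "gdist E (Inr b) (Inl p) = 1 \<longleftrightarrow> I p b"
proof
  assume "gdist E (Inr b) (Inl p) = 1"
  moreover have "(Inr b, Inl p) \<in> E ^^ gdist E (Inr b) (Inl p)"
    by (rule gdist_in[OF reach]) (use assms in \<open>auto simp: inc_vertices_def\<close>)
  ultimately have "(Inr b, Inl p) \<in> E" by simp
  then show "I p b" using e2 by blast
next
  assume "I p b"
  then show "gdist E (Inr b) (Inl p) = 1" using assms by (intro gdist_one) (auto simp: e2)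
qed

end



context stdl
begin

lemma main:
  assumes s: "(k * g) ^ 2 < 2 ^ s"
  shows "\<exists>S. resolving V E S \<and> finite S \<and> card S \<le> 2 * ((g - 1) * s)"
proof -
  define N where "N = k * g"
  define t where "t = (g - 1) * s"
  have "1 * 1 \<le> k * g" using k2 g2 by (intro mult_le_mono) auto
  then have N1: "N \<ge> 1" unfolding N_def by simp
  have s': "N ^ 2 < 2 ^ s" using s unfolding N_def .
  have Nk: "N \<le> k * g" unfolding N_def by simp
  have ar: "N ^ 2 * (N - k) ^ t < N ^ t"
    unfolding t_def by (rule count_arith[OF g2 s' Nk N1])
  define U1 where "U1 = {x \<in> P \<times> P. fst x \<noteq> snd x}"
  define D1 where "D1 = (\<lambda>x. {b\<in>Bl. I (fst x) b \<noteq> I (snd x) b})"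
  define U2 where "U2 = {x \<in> Bl \<times> Bl. fst x \<noteq> snd x}"
  define D2 where "D2 = (\<lambda>x. {p\<in>P. I p (fst x) \<noteq> I p (snd x)})"
  have cU1: "card U1 \<le> N ^ 2"
  proof -
    have "card U1 \<le> card (P \<times> P)" unfolding U1_def by (rule card_mono) (use finP in auto)
    then show ?thesis by (simp add: card_cartesian_product cP N_def power2_eq_square)
  qed
  have cU2: "card U2 \<le> N ^ 2"
  proof -
    have "card U2 \<le> card (Bl \<times> Bl)" unfolding U2_def by (rule card_mono) (use finB in auto)
    then show ?thesis by (simp add: card_cartesian_product cB N_def power2_eq_square)
  qed
  have ar1: "card U1 * (N - k) ^ t < N ^ t"
    by (rule le_less_trans[OF mult_le_mono1[OF cU1] ar])
  have ar2: "card U2 * (N - k) ^ t < N ^ t"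
    by (rule le_less_trans[OF mult_le_mono1[OF cU2] ar])
  have ptdeg': "\<forall>p\<in>P. card {b\<in>Bl. I p b} = k" using ptdeg by blast
  have blkdeg': "\<forall>b\<in>Bl. card {p\<in>P. (\<lambda>b p. I p b) b p} = k" using blkdeg by simp
  have "\<exists>T \<subseteq> Bl. card T \<le> t \<and> (\<forall>x\<in>U1. T \<inter> D1 x \<noteq> {})"
  proof (rule hitting[OF finB])
    show "finite U1" unfolding U1_def using finP by simp
    show "\<forall>x\<in>U1. D1 x \<subseteq> Bl \<and> k \<le> card (D1 x)"
    proof (intro ballI conjI)
      fix x assume "x \<in> U1"
      then obtain p q where x: "x = (p, q)" "p \<in> P" "q \<in> P" "p \<noteq> q" unfolding U1_def by auto
      show "D1 x \<subseteq> Bl" unfolding D1_def by blast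
      show "k \<le> card (D1 x)" using TD_dist[OF td ptdeg' kg x(2,3,4)] unfolding D1_def x by simp
    qed
    show "card U1 * (card Bl - k) ^ t < card Bl ^ t" using ar1 cB N_def by simp
  qed
  then obtain T where T: "T \<subseteq> Bl" "card T \<le> t" "\<forall>x\<in>U1. T \<inter> D1 x \<noteq> {}" by blast
  have "\<exists>T \<subseteq> P. card T \<le> t \<and> (\<forall>x\<in>U2. T \<inter> D2 x \<noteq> {})"
  proof (rule hitting[OF finP])
    show "finite U2" unfolding U2_def using finB by simp
    show "\<forall>x\<in>U2. D2 x \<subseteq> P \<and> k \<le> card (D2 x)"
    proof (intro ballI conjI)
      fix x assume "x \<in> U2"
      then obtain b c where x: "x = (b, c)" "b \<in> Bl" "c \<in> Bl" "b \<noteq> c" unfolding U2_def by auto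
      show "D2 x \<subseteq> P" unfolding D2_def by blast
      show "k \<le> card (D2 x)" using TD_dist[OF tdd blkdeg' kg x(2,3,4)] unfolding D2_def x by simp
    qed
    show "card U2 * (card P - k) ^ t < card P ^ t" using ar2 cP N_def by simp
  qed
  then obtain T' where T': "T' \<subseteq> P" "card T' \<le> t" "\<forall>x\<in>U2. T' \<inter> D2 x \<noteq> {}" by blast
  define S where "S = Inr ` T \<union> Inl ` T'"
  have finT: "finite T" using T(1) finB finite_subset by blast
  have finT': "finite T'" using T'(1) finP finite_subset by blast
  have cS: "card S \<le> 2 * t"
  proof -
    have "card S \<le> card (Inr ` T :: ('p + 'b) set) + card (Inl ` T' :: ('p + 'b) set)"
      unfolding S_def by (rule card_Un_le)
    also have "\<dots> \<le> card T + card T'" by (intro add_mono card_image_le finT finT')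
    finally show ?thesis using T(2) T'(2) by simp
  qed
  have SV: "S \<subseteq> V" unfolding S_def inc_vertices_def using T(1) T'(1) by auto
  have Sne: "S \<noteq> {}"
  proof -
    have "k * g \<ge> 2 * 2" using k2 g2 by (intro mult_le_mono)
    then have cP2: "card P \<ge> 2" using cP by simp
    obtain p where p: "p \<in> P" using Pne by blast
    have "card (P - {p}) \<ge> 1" using cP2 p finP by (simp add: card_Diff_singleton)
    then obtain q where q: "q \<in> P - {p}"
      by (metis card.empty all_not_in_conv not_one_le_zero)
    then have "(p, q) \<in> U1" unfolding U1_def using p by auto
    then have "T \<noteq> {}" using T(3) by blast
    then show ?thesis unfolding S_def by blast
  qed
  have res: "resolving V E S"
    unfolding resolving_def
  proof (intro conjI ballI impI)
    show "S \<subseteq> V" by (rule SV)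
    fix u w assume u: "u \<in> V" and w: "w \<in> V" and uw: "u \<noteq> w"
    show "\<exists>s\<in>S. gdist E u s \<noteq> gdist E w s"
    proof (cases "isl u = isl w")
      case False
      obtain s where "s \<in> S" using Sne by blast
      then show ?thesis using par_dist[OF u w _ False] SV by blast
    next
      case True
      consider (LL) p q where "u = Inl p" "w = Inl q" "p \<in> P" "q \<in> P"
        | (RR) b c where "u = Inr b" "w = Inr c" "b \<in> Bl" "c \<in> Bl"
        using u w True unfolding inc_vertices_def by auto
      then show ?thesis
      proof cases
        case LL
        then have "(p, q) \<in> U1" using uw unfolding U1_def by auto
        then have "T \<inter> D1 (p, q) \<noteq> {}" using T(3) by blast
        then obtain b where b: "b \<in> T" "I p b \<noteq> I q b" unfolding D1_def by auto
        have bB: "b \<in> Bl" using b T(1) by blast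
        have "gdist E (Inl p) (Inr b) \<noteq> gdist E (Inl q) (Inr b)"
          using gd_pb[OF LL(3) bB] gd_pb[OF LL(4) bB] b(2) by metis
        then show ?thesis using b(1) LL unfolding S_def by blast
      next
        case RR
        then have "(b, c) \<in> U2" using uw unfolding U2_def by auto
        then have "T' \<inter> D2 (b, c) \<noteq> {}" using T'(3) by blast
        then obtain p where p: "p \<in> T'" "I p b \<noteq> I p c" unfolding D2_def by auto
        have pP: "p \<in> P" using p T'(1) by blast
        have "gdist E (Inr b) (Inl p) \<noteq> gdist E (Inr c) (Inl p)"
          using gd_bp[OF pP RR(3)] gd_bp[OF pP RR(4)] p(2) by metis
        then show ?thesis using p(1) RR unfolding S_def by blast
      qed
    qed
  qed
  have finS: "finite S" unfolding S_def using finT finT' by simp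
  have cS': "card S \<le> 2 * ((g - 1) * s)" using cS unfolding t_def .
  show ?thesis
    apply (rule exI[of _ S])
    using res finS cS' by (intro conjI)
qed

lemma main_dim:
  assumes "(k * g) ^ 2 < 2 ^ s"
  shows "metric_dim V E \<le> 2 * ((g - 1) * s)"
proof -
  obtain S where S: "resolving V E S" "finite S" "card S \<le> 2 * ((g - 1) * s)"
    using main[OF assms] by blast
  have "metric_dim V E \<le> card S"
    unfolding metric_dim_def by (rule Least_le) (use S in blast)
  then show ?thesis using S(3) by simp
qed

end



lemma small_case:
  fixes X :: "'p set" and Bs :: "'b set"
  assumes std: "STD lam k g X Bs I" and k1: "k \<le> 1"
  shows "metric_dim (inc_vertices X Bs) (inc_edges X Bs I) \<le> 2 * g"
proof -
  have td: "TD lam k g X Bs I" and tdd: "TD lam k g Bs X (\<lambda>b p. I p b)"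
    using std unfolding STD_def by auto
  have finX: "finite X" and finB: "finite Bs" and cX: "card X = k * g" and cB: "card Bs = k * g"
    using td tdd unfolding TD_def by auto
  have ptdeg: "\<And>p. p \<in> X \<Longrightarrow> card {b\<in>Bs. I p b} = k" using tdd unfolding TD_def by auto
  have blkdeg: "\<And>b. b \<in> Bs \<Longrightarrow> card {p\<in>X. I p b} = k" using td unfolding TD_def by auto
  let ?V = "inc_vertices X Bs" and ?E = "inc_edges X Bs I"
  have nb: "\<forall>u\<in>?V. \<exists>u'\<in>?V. (u, u') \<in> ?E \<and> u \<noteq> u'"
  proof
    fix u assume u: "u \<in> ?V"
    have k0: "k \<noteq> 0"
    proof
      assume "k = 0"
      then have "X = {}" "Bs = {}" using cX cB finX finB by auto
      then show False using u unfolding inc_vertices_def by auto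
    qed
    consider (L) p where "u = Inl p" "p \<in> X" | (R) b where "u = Inr b" "b \<in> Bs"
      using u unfolding inc_vertices_def by blast
    then show "\<exists>u'\<in>?V. (u, u') \<in> ?E \<and> u \<noteq> u'"
    proof cases
      case L
      have "{b\<in>Bs. I p b} \<noteq> {}" using ptdeg[OF L(2)] k0 by (metis card.empty)
      then obtain b where "b \<in> Bs" "I p b" by blast
      then show ?thesis using L unfolding inc_vertices_def inc_edges_def by (intro bexI[of _ "Inr b"]) auto
    next
      case R
      have "{p\<in>X. I p b} \<noteq> {}" using blkdeg[OF R(2)] k0 by (metis card.empty)
      then obtain p where "p \<in> X" "I p b" by blast
      then show ?thesis using R unfolding inc_vertices_def inc_edges_def by (intro bexI[of _ "Inl p"]) auto
    qed
  qed
  have sy: "\<And>x y. (x, y) \<in> ?E \<Longrightarrow> (y, x) \<in> ?E" unfolding inc_edges_def by auto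
  have res: "resolving ?V ?E ?V" by (rule all_resolving[OF nb sy])
  have finV: "finite ?V" unfolding inc_vertices_def using finX finB by simp
  have "metric_dim ?V ?E \<le> card ?V"
    unfolding metric_dim_def by (rule Least_le) (use res finV in blast)
  also have "\<dots> \<le> card (Inl ` X :: ('p + 'b) set) + card (Inr ` Bs :: ('p + 'b) set)"
    unfolding inc_vertices_def by (rule card_Un_le)
  also have "\<dots> \<le> card X + card Bs" by (intro add_mono card_image_le finX finB)
  also have "\<dots> \<le> 2 * g"
  proof -
    have "k * g \<le> 1 * g" by (rule mult_le_mono1[OF k1])
    then show ?thesis using cX cB by linarith
  qed
  finally show ?thesis .
qed

lemma ln2_ge: "ln (2::real) \<ge> 1 / 2"
proof -
  have "ln (1 / 2 :: real) \<le> 1 / 2 - 1" by (rule ln_le_minus_one) simp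
  moreover have "ln (1 / 2 :: real) = - ln 2" by (simp add: ln_div)
  ultimately show ?thesis by simp
qed

lemma bound:
  fixes X :: "'p set" and Bs :: "'b set"
  assumes lam: "lam \<ge> 1" and g: "g \<ge> 2" and std: "STD lam k g X Bs I"
  shows "real (metric_dim (inc_vertices X Bs) (inc_edges X Bs I))
           \<le> 16 * sqrt (real (2 * lam * g ^ 2)) * ln (real (2 * lam * g ^ 2))"
proof -
  define n where "n = real (2 * lam * g ^ 2)"
  define M where "M = metric_dim (inc_vertices X Bs) (inc_edges X Bs I)"
  have "g ^ 2 \<ge> 2 ^ 2" using g by (rule power_mono) simp
  then have "2 * lam * g ^ 2 \<ge> 2 * 1 * 2 ^ 2" using lam by (intro mult_le_mono) auto
  then have "8 \<le> 2 * lam * g ^ 2" by simp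
  then have "real 8 \<le> real (2 * lam * g ^ 2)" by (simp only: of_nat_le_iff)
  then have n8: "n \<ge> 8" unfolding n_def by simp
  have "ln 8 = ln ((2::real) ^ 3)" by simp
  also have "\<dots> = 3 * ln 2" using ln_realpow[of "2::real" 3] by simp
  finally have "ln (8::real) \<ge> 3 / 2" using ln2_ge by simp
  moreover have "ln 8 \<le> ln n" using n8 by simp
  ultimately have lnn: "ln n \<ge> 3 / 2" by simp
  have "real g ^ 2 \<le> n"
  proof -
    have "g ^ 2 \<le> 2 * lam * g ^ 2" using lam by simp
    then have "real (g ^ 2) \<le> real (2 * lam * g ^ 2)" by (simp only: of_nat_le_iff)
    then show ?thesis unfolding n_def by simp
  qed
  then have "sqrt (real g ^ 2) \<le> sqrt n" by (simp only: real_sqrt_le_iff)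
  then have sq: "real g \<le> sqrt n" by simp
  have gln: "real g * ln n \<le> sqrt n * ln n" using sq lnn by (intro mult_right_mono) auto
  show ?thesis
  proof (cases "k \<le> 1")
    case True
    have "real M \<le> 2 * real g" using small_case[OF std True] unfolding M_def by simp
    also have "\<dots> \<le> 16 * (real g * ln n)"
    proof -
      have "real g * 1 \<le> real g * ln n" using lnn by (intro mult_left_mono) auto
      then show ?thesis by simp
    qed
    also have "\<dots> \<le> 16 * (sqrt n * ln n)" using gln by simp
    finally show ?thesis unfolding M_def n_def by simp
  next
    case False
    then have k2: "k \<ge> 2" by simp
    interpret stdl lam k g X Bs I
      using std lam k2 unfolding STD_def by unfold_locales auto
    define N where "N = k * g"
    have NN: "real N = n / 2" unfolding N_def n_def kg by (simp add: power2_eq_square)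
    have N1: "real N \<ge> 1" using NN n8 by simp
    define L where "L = nat \<lceil>log 2 (real N)\<rceil>"
    have lg0: "log 2 (real N) \<ge> 0" using N1 by simp
    have "real N = 2 powr (log 2 (real N))" using N1 by simp
    also have "\<dots> \<le> 2 powr (real L)" unfolding L_def by (rule powr_mono) (auto intro: real_nat_ceiling_ge)
    also have "\<dots> = 2 ^ L" by (simp add: powr_realpow)
    finally have "real N \<le> real (2 ^ L)" by simp
    then have NL: "N \<le> 2 ^ L" by (simp only: of_nat_le_iff)
    have "N ^ 2 \<le> (2 ^ L) ^ 2" using NL by (rule power_mono) simp
    also have "\<dots> < 2 ^ (2 * L + 1)" by (simp add: power_mult[symmetric] mult.commute)
    finally have s: "(k * g) ^ 2 < 2 ^ (2 * L + 1)" unfolding N_def .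
    have Mb: "M \<le> 2 * ((g - 1) * (2 * L + 1))" unfolding M_def by (rule main_dim[OF s])
    have "real L \<le> log 2 (real N) + 1"
      unfolding L_def using lg0 by (simp add: of_nat_nat)
    moreover have "log 2 (real N) \<le> 2 * ln n"
    proof -
      have lN0: "ln (real N) \<ge> 0" using N1 by simp
      have "log 2 (real N) = ln (real N) / ln 2" by (simp add: log_def)
      also have "\<dots> \<le> ln (real N) / (1 / 2)"
        using lN0 ln2_ge by (intro divide_left_mono) auto
      also have "\<dots> = 2 * ln (real N)" by simp
      also have "\<dots> \<le> 2 * ln n" using NN N1 by simp
      finally show ?thesis .
    qed
    ultimately have Lb: "2 * real L + 1 \<le> 6 * ln n" using lnn by linarith
    have "(g - 1) * (2 * L + 1) \<le> g * (2 * L + 1)" by (rule mult_le_mono1) simp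
    then have "M \<le> 2 * (g * (2 * L + 1))" using Mb by linarith
    then have "real M \<le> real (2 * (g * (2 * L + 1)))" by (simp only: of_nat_le_iff)
    then have "real M \<le> 2 * (real g * (2 * real L + 1))" by (simp add: algebra_simps)
    also have "\<dots> \<le> 2 * (real g * (6 * ln n))"
      using Lb g by (intro mult_left_mono mult_mono) auto
    also have "\<dots> = 12 * (real g * ln n)" by simp
    also have "\<dots> \<le> 16 * (real g * ln n)"
    proof -
      have "0 \<le> real g * ln n" using lnn by simp
      then show ?thesis by simp
    qed
    also have "\<dots> \<le> 16 * (sqrt n * ln n)" using gln by simp
    finally show ?thesis unfolding M_def n_def by simp
  qed
qed

theorem corollary3p5:
  shows "\<exists>C::real. \<forall>(lam::nat) (k::nat) (g::nat) (X::nat set) (Bs::nat set) (I::nat \<Rightarrow> nat \<Rightarrow> bool).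
     lam \<ge> 1 \<longrightarrow> g \<ge> 2 \<longrightarrow> STD lam k g X Bs I \<longrightarrow>
     (let n = real (2 * lam * g ^ 2) in
       real (metric_dim (inc_vertices X Bs) (inc_edges X Bs I)) \<le> C * sqrt n * ln n)"
  by (intro exI[of _ 16] allI impI) (simp only: Let_def bound)


end
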